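(* Let $P_0,P_1,P_2\in\mathbb H$ be distinct, and let $\alpha:=-1+\langle P_0,P_1\rangle+\langle P_1,P_2\rangle+\langle P_2,P_0\rangle$ and $\chi:=\langle P_0\tilde\times P_1,P_2\rangle$. Let $Q_0,Q_2\in\mathbb H$ be such that $P_0P_1Q_2$ and $P_1P_2Q_0$ are equilateral, and let $R_2$, $R_0$ be the centroids of $P_0P_1Q_2$ and $P_1P_2Q_0$ respectively; let $\varepsilon_0,\varepsilon_2\in\{-1,1\}$ be the signs with $$R_2=\frac{\sqrt{1-2\langle P_0,P_1\rangle}(P_0+P_1)+\varepsilon_2P_0\tilde\times P_1}{\sqrt3(1-\langle P_0,P_1\rangle)},\quad R_0=\frac{\sqrt{1-2\langle P_1,P_2\rangle}(P_1+P_2)+\varepsilon_0P_1\tilde\times P_2}{\sqrt3(1-\langle P_1,P_2\rangle)}.$$ Then $$\begin{aligned}&3(1-\langle P_0,P_1\rangle)(1-\langle P_1,P_2\rangle)\langle R_2,R_0\rangle=\alpha\sqrt{1-2\langle P_0,P_1\rangle}\sqrt{1-2\langle P_1,P_2\rangle}\\&\quad+\chi\Bigl(\varepsilon_0\sqrt{1-2\langle P_0,P_1\rangle}+\varepsilon_2\sqrt{1-2\langle P_1,P_2\rangle}\Bigr)-\varepsilon_2\varepsilon_0\bigl(\langle P_0,P_1\rangle\langle P_1,P_2\rangle+\langle P_0,P_2\rangle\bigr).\end{aligned}$$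
   Context: $\langle v,w\rangle=-v_1w_1+v_2w_2+v_3w_3$ on $\mathbb R^3$; $\mathbb H=\{P\in\mathbb R^3:\langle P,P\rangle=-1,\ P_1\ge1\}$; $v\tilde\times w:=J(v\times w)$ with $J=\mathrm{diag}(-1,1,1)$ and $\times$ the Euclidean cross product. A triangle $ABC$ in $\mathbb H$ is equilateral if $\langle A,B\rangle=\langle B,C\rangle=\langle C,A\rangle$; its centroid is $(A+B+C)/\sqrt{-\langle A+B+C,A+B+C\rangle}$. *)

theory Defs
  imports "HOL-Analysis.Analysis"
begin

definition mink :: "real^3 \<Rightarrow> real^3 \<Rightarrow> real" where
  "mink v w = - (v$1 * w$1) + v$2 * w$2 + v$3 * w$3"

definition hyp :: "(real^3) set" where
  "hyp = {P. mink P P = -1 \<and> P$1 \<ge> 1}"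

definition Jmat :: "real^3 \<Rightarrow> real^3" where
  "Jmat v = vector [- (v$1), v$2, v$3]"

definition lcross :: "real^3 \<Rightarrow> real^3 \<Rightarrow> real^3" where
  "lcross v w = Jmat (cross3 v w)"

definition equilateral :: "real^3 \<Rightarrow> real^3 \<Rightarrow> real^3 \<Rightarrow> bool" where
  "equilateral A B C \<longleftrightarrow> mink A B = mink B C \<and> mink B C = mink C A"

definition centroid :: "real^3 \<Rightarrow> real^3 \<Rightarrow> real^3 \<Rightarrow> real^3" where
  "centroid A B C = (1 / sqrt (- mink (A + B + C) (A + B + C))) *\<^sub>R (A + B + C)"

end

theory Submission imports Defs begin
lemma mink_comm: "mink x y = mink y x" unfolding mink_def by (simp add: mult.commute)
lemma mink_addL: "mink (x + y) z = mink x z + mink y z" unfolding mink_def by (simp add: algebra_simps)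
lemma mink_addR: "mink z (x + y) = mink z x + mink z y" unfolding mink_def by (simp add: algebra_simps)
lemma mink_scL: "mink (c *\<^sub>R x) z = c * mink x z" unfolding mink_def by (simp add: algebra_simps)
lemma mink_scR: "mink z (c *\<^sub>R x) = c * mink z x" unfolding mink_def by (simp add: algebra_simps)
lemma lc_comp: "lcross a b $ 1 = - (a$2 * b$3 - a$3 * b$2)" "lcross a b $ 2 = a$3 * b$1 - a$1 * b$3"
  "lcross a b $ 3 = a$1 * b$2 - a$2 * b$1"
  unfolding lcross_def Jmat_def by (simp_all add: vector_3 cross3_simps)
lemma lc_lc: "mink (lcross a b) (lcross c d) = mink a d * mink b c - mink a c * mink b d"
  unfolding mink_def lc_comp by algebra
lemma lc_self1: "mink (lcross a b) b = 0" unfolding mink_def lc_comp by algebra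
lemma lc_self2: "mink (lcross a b) a = 0" unfolding mink_def lc_comp by algebra
lemma lc_cyc: "mink a (lcross b c) = mink (lcross a b) c" unfolding mink_def lc_comp by algebra
lemma lc_aa: "mink (lcross a a) c = 0" unfolding mink_def lc_comp by algebra
lemma hyp_le: assumes "P \<in> hyp" "Q \<in> hyp" shows "mink P Q \<le> -1"
proof -
  have p: "P$1*P$1 = 1 + (P$2*P$2 + P$3*P$3)" "P$1 \<ge> 1" and q: "Q$1*Q$1 = 1 + (Q$2*Q$2 + Q$3*Q$3)" "Q$1 \<ge> 1"
    using assms unfolding hyp_def mink_def by auto
  define u where "u = P$2*Q$2 + P$3*Q$3"
  define p' where "p' = P$2*P$2 + P$3*P$3"
  define q' where "q' = Q$2*Q$2 + Q$3*Q$3"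
  have u2: "u*u \<le> p'*q'" unfolding u_def p'_def q'_def
    using sum_squares_ge_zero[of "P$2*Q$3 - P$3*Q$2" 0] by (simp add: algebra_simps power2_eq_square)
  have u3: "2*u \<le> p' + q'" unfolding u_def p'_def q'_def
    using sum_squares_ge_zero[of "P$2-Q$2" "P$3-Q$3"] by (simp add: algebra_simps power2_eq_square)
  have pq: "(P$1*Q$1)*(P$1*Q$1) = (1+p')*(1+q')" proof -
    have "(P$1*Q$1)*(P$1*Q$1) = (P$1*P$1)*(Q$1*Q$1)" by (simp add: algebra_simps)
    then show ?thesis using p q unfolding p'_def q'_def by simp
  qed
  have "P$1*Q$1 \<ge> 1 + u"
  proof (cases "1 + u \<le> 0")
    case True then show ?thesis using p q mult_mono[of 1 "P$1" 1 "Q$1"] by auto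
  next
    case False
    have "(1+u)*(1+u) \<le> (P$1*Q$1)*(P$1*Q$1)" using pq u2 u3 by (simp add: algebra_simps)
    moreover have "P$1*Q$1 \<ge> 0" using p q by simp
    ultimately show ?thesis using False mult_strict_mono[of "P$1*Q$1" "1+u" "P$1*Q$1" "1+u"] by (cases "P$1*Q$1 < 1+u") auto
  qed
  then show ?thesis unfolding mink_def u_def by simp
qed
theorem lemma3p1:
  fixes P0 P1 P2 Q0 Q2 R0 R2 :: "real^3" and \<epsilon>0 \<epsilon>2 :: real
  assumes hP: "P0 \<in> hyp" "P1 \<in> hyp" "P2 \<in> hyp"
    and dist: "P0 \<noteq> P1" "P1 \<noteq> P2" "P0 \<noteq> P2"
    and hQ: "Q0 \<in> hyp" "Q2 \<in> hyp"
    and eq: "equilateral P0 P1 Q2" "equilateral P1 P2 Q0"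
    and R2: "R2 = centroid P0 P1 Q2" and R0: "R0 = centroid P1 P2 Q0"
    and eps: "\<epsilon>0 \<in> {-1, 1}" "\<epsilon>2 \<in> {-1, 1}"
    and R2f: "R2 = (1 / (sqrt 3 * (1 - mink P0 P1))) *\<^sub>R
                 (sqrt (1 - 2 * mink P0 P1) *\<^sub>R (P0 + P1) + \<epsilon>2 *\<^sub>R lcross P0 P1)"
    and R0f: "R0 = (1 / (sqrt 3 * (1 - mink P1 P2))) *\<^sub>R
                 (sqrt (1 - 2 * mink P1 P2) *\<^sub>R (P1 + P2) + \<epsilon>0 *\<^sub>R lcross P1 P2)"
  shows "3 * (1 - mink P0 P1) * (1 - mink P1 P2) * mink R2 R0 =
      (-1 + mink P0 P1 + mink P1 P2 + mink P2 P0) * sqrt (1 - 2 * mink P0 P1) * sqrt (1 - 2 * mink P1 P2)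
      + mink (lcross P0 P1) P2 * (\<epsilon>0 * sqrt (1 - 2 * mink P0 P1) + \<epsilon>2 * sqrt (1 - 2 * mink P1 P2))
      - \<epsilon>2 * \<epsilon>0 * (mink P0 P1 * mink P1 P2 + mink P0 P2)"
proof -
  define a where "a = mink P0 P1"
  define b where "b = mink P1 P2"
  define X where "X = sqrt (1 - 2 * a) *\<^sub>R (P0 + P1) + \<epsilon>2 *\<^sub>R lcross P0 P1"
  define Y where "Y = sqrt (1 - 2 * b) *\<^sub>R (P1 + P2) + \<epsilon>0 *\<^sub>R lcross P1 P2"
  have a1: "1 - a > 0" using hyp_le[OF hP(1) hP(2)] unfolding a_def by simp
  have b1: "1 - b > 0" using hyp_le[OF hP(2) hP(3)] unfolding b_def by simp
  have s3: "sqrt 3 * sqrt 3 = (3::real)" by simp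
  have "mink R2 R0 = mink X Y / (sqrt 3 * (1 - a) * (sqrt 3 * (1 - b)))"
    unfolding R2f R0f X_def Y_def a_def b_def mink_scL mink_scR by simp
  also have "\<dots> = mink X Y / (3 * (1 - a) * (1 - b))"
    using s3 by (simp add: algebra_simps)
  finally have R: "3 * (1 - a) * (1 - b) * mink R2 R0 = mink X Y" using a1 b1 by simp
  have P11: "mink P1 P1 = -1" using hP(2) unfolding hyp_def by simp
  have "mink X Y = (-1 + a + b + mink P2 P0) * sqrt (1 - 2 * a) * sqrt (1 - 2 * b)
      + mink (lcross P0 P1) P2 * (\<epsilon>0 * sqrt (1 - 2 * a) + \<epsilon>2 * sqrt (1 - 2 * b))
      - \<epsilon>2 * \<epsilon>0 * (a * b + mink P0 P2)"
    unfolding X_def Y_def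
    by (simp add: mink_addL mink_addR mink_scL mink_scR lc_lc lc_self1 lc_self2 P11 a_def b_def
        mink_comm[of P1 P0] mink_comm[of P2 P0] mink_comm[of P2 P1] algebra_simps lc_cyc[of P0 P1 P2]
        mink_comm[of P2 "lcross P0 P1"] lc_cyc[of P1 P1 P2] lc_aa)
  then show ?thesis using R unfolding a_def b_def by simp
qed
end
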